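(* Let $n\neq 1$ be a real number, $k_n=n-1$, and $k_0,k_1,k_2\in\mathbb{R}$. On the phase space with canonical coordinates $(r,\phi,p_r,p_\phi)$, $r>0$, restricted to the open set where $\sin(k_n\phi)\neq 0$, consider $$H_{nc1}=\tfrac12 r^{2n}\Big(p_r^2+\tfrac{p_\phi^2}{r^2}\Big)+k_0r^{n-1}+r^{2k_n}\Big(\frac{k_1}{\sin^2(k_n\phi)}+k_2\frac{\cos(k_n\phi)}{\sin^2(k_n\phi)}\Big).$$ With $P_2=r^n\big(p_r\sin(k_n\phi)-\tfrac1r p_\phi\cos(k_n\phi)\big)$, define $$J_{c2}=p_\phi^2+2\Big(\frac{k_1}{\sin^2(k_n\phi)}+k_2\frac{\cos(k_n\phi)}{\sin^2(k_n\phi)}\Big),$$ $$J_{c3}=P_2p_\phi-k_0\cos(k_n\phi)-2k_1r^{k_n}\csc(k_n\phi)\cot(k_n\phi)-k_2r^{k_n}\big(\csc^2(k_n\phi)+\cot^2(k_n\phi)\big).$$ Then $\{J_{c2},H_{nc1}\}=0$, $\{J_{c3},H_{nc1}\}=0$, and $dJ_{c2}\wedge dJ_{c3}\wedge dH_{nc1}\neq 0$; hence $H_{nc1}$ is superintegrable.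
   Context: The Poisson bracket is the canonical one in $(r,\phi,p_r,p_\phi)$. *)

theory Defs
  imports "HOL-Analysis.Analysis"
begin

text \<open>Phase-space functions are curried functions of the canonical coordinates
  (r, phi, p_r, p_phi).\<close>

type_synonym phasefun = "real \<Rightarrow> real \<Rightarrow> real \<Rightarrow> real \<Rightarrow> real"

definition d_r :: "phasefun \<Rightarrow> phasefun" where
  "d_r F r f pr pf = deriv (\<lambda>t. F t f pr pf) r"
definition d_phi :: "phasefun \<Rightarrow> phasefun" where
  "d_phi F r f pr pf = deriv (\<lambda>t. F r t pr pf) f"
definition d_pr :: "phasefun \<Rightarrow> phasefun" where
  "d_pr F r f pr pf = deriv (\<lambda>t. F r f t pf) pr"
definition d_pphi :: "phasefun \<Rightarrow> phasefun" where
  "d_pphi F r f pr pf = deriv (\<lambda>t. F r f pr t) pf"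

definition poisson :: "phasefun \<Rightarrow> phasefun \<Rightarrow> phasefun" where
  "poisson F G r f pr pf =
     d_r F r f pr pf * d_pr G r f pr pf - d_pr F r f pr pf * d_r G r f pr pf
   + d_phi F r f pr pf * d_pphi G r f pr pf - d_pphi F r f pr pf * d_phi G r f pr pf"

definition grad :: "phasefun \<Rightarrow> real \<Rightarrow> real \<Rightarrow> real \<Rightarrow> real \<Rightarrow> nat \<Rightarrow> real" where
  "grad F r f pr pf i =
     (if i = 0 then d_r F r f pr pf else if i = 1 then d_phi F r f pr pf
      else if i = 2 then d_pr F r f pr pf else d_pphi F r f pr pf)"

text \<open>Component of the 3-form dF \<and> dG \<and> dK on the basis element dx_i \<and> dx_j \<and> dx_k
  (indices 0..3 for r, phi, p_r, p_phi): the 3x3 determinant of the gradient columns.\<close>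
definition wedge3 :: "phasefun \<Rightarrow> phasefun \<Rightarrow> phasefun \<Rightarrow> real \<Rightarrow> real \<Rightarrow> real \<Rightarrow> real
    \<Rightarrow> nat \<Rightarrow> nat \<Rightarrow> nat \<Rightarrow> real" where
  "wedge3 F G K r f pr pf i j k =
    (let a = grad F r f pr pf; b = grad G r f pr pf; c = grad K r f pr pf in
       a i * (b j * c k - b k * c j) - a j * (b i * c k - b k * c i)
     + a k * (b i * c j - b j * c i))"

definition wedge3_nonzero_at :: "phasefun \<Rightarrow> phasefun \<Rightarrow> phasefun \<Rightarrow> real \<Rightarrow> real \<Rightarrow> real \<Rightarrow> real \<Rightarrow> bool" where
  "wedge3_nonzero_at F G K r f pr pf \<longleftrightarrow>
     (\<exists>i j k. i < j \<and> j < k \<and> k < 4 \<and> wedge3 F G K r f pr pf i j k \<noteq> 0)"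

definition Hnc1 :: "real \<Rightarrow> real \<Rightarrow> real \<Rightarrow> real \<Rightarrow> phasefun" where
  "Hnc1 n k0 k1 k2 r f pr pf =
     (let kn = n - 1 in
      1/2 * r powr (2*n) * (pr^2 + pf^2 / r^2) + k0 * r powr (n - 1)
      + r powr (2*kn) * (k1 / (sin (kn*f))^2 + k2 * cos (kn*f) / (sin (kn*f))^2))"

definition P2 :: "real \<Rightarrow> phasefun" where
  "P2 n r f pr pf = (let kn = n - 1 in r powr n * (pr * sin (kn*f) - 1/r * pf * cos (kn*f)))"

definition Jc2 :: "real \<Rightarrow> real \<Rightarrow> real \<Rightarrow> phasefun" where
  "Jc2 n k1 k2 r f pr pf =
     (let kn = n - 1 in
      pf^2 + 2 * (k1 / (sin (kn*f))^2 + k2 * cos (kn*f) / (sin (kn*f))^2))"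

definition Jc3 :: "real \<Rightarrow> real \<Rightarrow> real \<Rightarrow> real \<Rightarrow> phasefun" where
  "Jc3 n k0 k1 k2 r f pr pf =
     (let kn = n - 1; csc = 1 / sin (kn*f); ct = cos (kn*f) / sin (kn*f) in
      P2 n r f pr pf * pf - k0 * cos (kn*f) - 2 * k1 * r powr kn * csc * ct
      - k2 * r powr kn * (csc^2 + ct^2))"

definition dom_nc1 :: "real \<Rightarrow> (real \<times> real \<times> real \<times> real) set" where
  "dom_nc1 n = {(r, f, pr, pf). r > 0 \<and> sin ((n - 1) * f) \<noteq> 0}"

end

theory Submission imports Defs begin
lemma powr_facts:
  fixes r n :: real assumes "r > 0"
  shows "r powr (2*n) = (r powr n)^2" "r powr (n-1) = r powr n / r"
    "r powr (2*(n-1)) = (r powr n)^2 / r^2"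
    "r powr (2*n - 1) = (r powr n)^2 / r"
    "r powr (n - 1 - 1) = r powr n / r^2"
    "r powr (2*(n-1) - 1) = (r powr n)^2 / r^3"
    "r powr (n - 2) = r powr n / r^2"
    "r powr (2*n - 2) = (r powr n)^2 / r^2"
    "r powr (2*n - 3) = (r powr n)^2 / r^3"
    "r powr (n - 3) = r powr n / r^3"
  using assms
  by (simp_all add: powr_diff powr_mult_base power2_eq_square powr_add[symmetric] 
       algebra_simps power3_eq_cube flip: mult_2)


lemma dr_H:
  assumes "r > 0"
  shows "d_r (Hnc1 n k0 k1 k2) r f pr pf =
    n*(r powr n)^2/r*(pr^2+pf^2/r^2) - (r powr n)^2*pf^2/r^3 + k0*(n-1)*(r powr n)/r^2
    + 2*(n-1)*(r powr n)^2/r^3 * (k1 / (sin ((n-1)*f))^2 + k2 * cos ((n-1)*f) / (sin ((n-1)*f))^2)"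
  unfolding d_r_def
proof (rule DERIV_imp_deriv)
  define W where "W = k1 / (sin ((n-1)*f))^2 + k2 * cos ((n-1)*f) / (sin ((n-1)*f))^2"
  show "((\<lambda>t. Hnc1 n k0 k1 k2 t f pr pf) has_real_derivative
    n*(r powr n)^2/r*(pr^2+pf^2/r^2) - (r powr n)^2*pf^2/r^3 + k0*(n-1)*(r powr n)/r^2
    + 2*(n-1)*(r powr n)^2/r^3 * (k1 / (sin ((n-1)*f))^2 + k2 * cos ((n-1)*f) / (sin ((n-1)*f))^2)) (at r)"
    unfolding Hnc1_def Let_def W_def[symmetric]
    apply (rule derivative_eq_intros refl assms | (use assms in \<open>simp; fail\<close>))+
    using assms apply (simp add: powr_facts)
    using assms apply (simp add: field_simps eval_nat_numeral)
    done
qed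

lemma dphi_H:
  assumes "r > 0" "sin ((n-1)*f) \<noteq> 0"
  shows "d_phi (Hnc1 n k0 k1 k2) r f pr pf =
    (r powr n)^2/r^2 * ((n-1)*(-k2*(sin ((n-1)*f))^2 - 2*cos ((n-1)*f)*(k1+k2*cos ((n-1)*f)))/(sin ((n-1)*f))^3)"
  unfolding d_phi_def
proof (rule DERIV_imp_deriv)
  show "((\<lambda>t. Hnc1 n k0 k1 k2 r t pr pf) has_real_derivative
    (r powr n)^2/r^2 * ((n-1)*(-k2*(sin ((n-1)*f))^2 - 2*cos ((n-1)*f)*(k1+k2*cos ((n-1)*f)))/(sin ((n-1)*f))^3)) (at f)"
    unfolding Hnc1_def Let_def
    apply (rule derivative_eq_intros refl assms | (use assms in \<open>simp; fail\<close>))+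
    using assms apply (simp add: powr_facts)
    using assms apply (simp add: field_simps eval_nat_numeral)
    done
qed

lemma dpr_H:
  shows "d_pr (Hnc1 n k0 k1 k2) r f pr pf = (r powr n)^2 * pr"
  unfolding d_pr_def
proof (rule DERIV_imp_deriv)
  show "((\<lambda>t. Hnc1 n k0 k1 k2 r f t pf) has_real_derivative (r powr n)^2 * pr) (at pr)"
    unfolding Hnc1_def Let_def
    apply (rule derivative_eq_intros refl | (simp; fail))+
    apply (simp add: powr_mult_base power2_eq_square powr_add[symmetric] flip: mult_2)
    done
qed

lemma dpf_H:
  assumes "r > 0"
  shows "d_pphi (Hnc1 n k0 k1 k2) r f pr pf = (r powr n)^2 * pf / r^2"
  unfolding d_pphi_def
proof (rule DERIV_imp_deriv)
  show "((\<lambda>t. Hnc1 n k0 k1 k2 r f pr t) has_real_derivative (r powr n)^2 * pf / r^2) (at pf)"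
    unfolding Hnc1_def Let_def
    apply (rule derivative_eq_intros refl assms | (use assms in \<open>simp; fail\<close>))+
    using assms apply (simp add: powr_facts)
    using assms apply (simp add: field_simps eval_nat_numeral)
    done
qed

lemma dr_J2: "d_r (Jc2 n k1 k2) r f pr pf = 0"
  unfolding d_r_def Jc2_def Let_def by simp
lemma dpr_J2: "d_pr (Jc2 n k1 k2) r f pr pf = 0"
  unfolding d_pr_def Jc2_def Let_def by simp

lemma dphi_J2:
  assumes "sin ((n-1)*f) \<noteq> 0"
  shows "d_phi (Jc2 n k1 k2) r f pr pf =
    2 * ((n-1)*(-k2*(sin ((n-1)*f))^2 - 2*cos ((n-1)*f)*(k1+k2*cos ((n-1)*f)))/(sin ((n-1)*f))^3)"
  unfolding d_phi_def
proof (rule DERIV_imp_deriv)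
  show "((\<lambda>t. Jc2 n k1 k2 r t pr pf) has_real_derivative
    2 * ((n-1)*(-k2*(sin ((n-1)*f))^2 - 2*cos ((n-1)*f)*(k1+k2*cos ((n-1)*f)))/(sin ((n-1)*f))^3)) (at f)"
    unfolding Jc2_def Let_def
    apply (rule derivative_eq_intros refl assms | (use assms in \<open>simp; fail\<close>))+
    using assms apply (simp add: field_simps eval_nat_numeral)
    done
qed

lemma dpf_J2:
  shows "d_pphi (Jc2 n k1 k2) r f pr pf = 2 * pf"
  unfolding d_pphi_def
proof (rule DERIV_imp_deriv)
  show "((\<lambda>t. Jc2 n k1 k2 r f pr t) has_real_derivative 2 * pf) (at pf)"
    unfolding Jc2_def Let_def
    apply (rule derivative_eq_intros refl | (simp; fail))+
    done
qed

lemma dr_J3: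
  assumes "r > 0" "sin ((n-1)*f) \<noteq> 0"
  shows "d_r (Jc3 n k0 k1 k2) r f pr pf =
    n*(r powr n)/r*(pr* sin ((n-1)*f) - pf*cos ((n-1)*f)/r)*pf + (r powr n)*pf^2*cos ((n-1)*f)/r^2
    - (n-1)*(r powr n)/r^2 * ((2*k1*cos ((n-1)*f) + k2*(1+(cos ((n-1)*f))^2))/(sin ((n-1)*f))^2)"
  unfolding d_r_def
proof (rule DERIV_imp_deriv)
  define s where "s = sin ((n-1)*f)"
  define c where "c = cos ((n-1)*f)"
  have "s \<noteq> 0" using assms s_def by simp
  show "((\<lambda>t. Jc3 n k0 k1 k2 t f pr pf) has_real_derivative
    n*(r powr n)/r*(pr* sin ((n-1)*f) - pf*cos ((n-1)*f)/r)*pf + (r powr n)*pf^2*cos ((n-1)*f)/r^2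
    - (n-1)*(r powr n)/r^2 * ((2*k1*cos ((n-1)*f) + k2*(1+(cos ((n-1)*f))^2))/(sin ((n-1)*f))^2)) (at r)"
    unfolding Jc3_def P2_def Let_def s_def[symmetric] c_def[symmetric]
    apply (rule derivative_eq_intros refl assms | (use assms in \<open>simp; fail\<close>))+
    using assms \<open>s \<noteq> 0\<close> apply (simp add: powr_facts)
    using assms \<open>s \<noteq> 0\<close> apply (simp add: field_simps eval_nat_numeral)
    done
qed

lemma dpr_J3:
  shows "d_pr (Jc3 n k0 k1 k2) r f pr pf = r powr n * sin ((n-1)*f) * pf"
  unfolding d_pr_def
proof (rule DERIV_imp_deriv)
  show "((\<lambda>t. Jc3 n k0 k1 k2 r f t pf) has_real_derivative r powr n * sin ((n-1)*f) * pf) (at pr)"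
    unfolding Jc3_def P2_def Let_def
    apply (rule derivative_eq_intros refl | (simp; fail))+
    done
qed

lemma dpf_J3:
  shows "d_pphi (Jc3 n k0 k1 k2) r f pr pf = r powr n * (pr* sin ((n-1)*f) - 2*pf*cos ((n-1)*f)/r)"
  unfolding d_pphi_def
proof (rule DERIV_imp_deriv)
  show "((\<lambda>t. Jc3 n k0 k1 k2 r f pr t) has_real_derivative r powr n * (pr* sin ((n-1)*f) - 2*pf*cos ((n-1)*f)/r)) (at pf)"
    unfolding Jc3_def P2_def Let_def
    apply (rule derivative_eq_intros refl | (simp; fail))+
    apply (simp add: field_simps)
    done
qed

lemma dphi_J3:
  assumes "r > 0" "sin ((n-1)*f) \<noteq> 0"
  shows "d_phi (Jc3 n k0 k1 k2) r f pr pf =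
    r powr n*(n-1)*(pr*cos ((n-1)*f) + pf* sin ((n-1)*f)/r)*pf + k0*(n-1)* sin ((n-1)*f)
    - r powr n/r * ((n-1)*((-2*k1-2*k2*cos ((n-1)*f))*(sin ((n-1)*f))^2
        - 2*cos ((n-1)*f)*(2*k1*cos ((n-1)*f)+k2+k2*(cos ((n-1)*f))^2))/(sin ((n-1)*f))^3)"
  unfolding d_phi_def
proof (rule DERIV_imp_deriv)
  define s where "s = sin ((n-1)*f)"
  define c where "c = cos ((n-1)*f)"
  have "s \<noteq> 0" using assms s_def by simp
  show "((\<lambda>t. Jc3 n k0 k1 k2 r t pr pf) has_real_derivative
    r powr n*(n-1)*(pr*cos ((n-1)*f) + pf* sin ((n-1)*f)/r)*pf + k0*(n-1)* sin ((n-1)*f)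
    - r powr n/r * ((n-1)*((-2*k1-2*k2*cos ((n-1)*f))*(sin ((n-1)*f))^2
        - 2*cos ((n-1)*f)*(2*k1*cos ((n-1)*f)+k2+k2*(cos ((n-1)*f))^2))/(sin ((n-1)*f))^3)) (at f)"
    unfolding Jc3_def P2_def Let_def
    apply (rule derivative_eq_intros refl assms | (use assms in \<open>simp; fail\<close>))+
    using assms apply (simp add: powr_facts)
    unfolding s_def[symmetric] c_def[symmetric]
    using assms \<open>s \<noteq> 0\<close> apply (simp add: field_simps eval_nat_numeral)
    done
qed

lemma alg3p:
  fixes A u s v c n k0 k1 k2 pr pf :: real
  assumes sv: "s* v = 1" and sc: "s^2 + c^2 = 1"
  shows "(n*A*u*(pr* s - pf*c*u)*pf + A*pf^2*c*u^2 - (n-1)*A*u^2 * ((2*k1*c + k2*(1+c^2))* v^2))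
           * (A^2 * pr)
        - (A * s * pf) * (n*A^2*u*(pr^2+pf^2*u^2) - A^2*pf^2*u^3 + k0*(n-1)*A*u^2
              + 2*(n-1)*A^2*u^3 * (k1 * v^2 + k2 * c * v^2))
        + (A*(n-1)*(pr*c + pf* s*u)*pf + k0*(n-1)* s
            - A*u * ((n-1)*((-2*k1-2*k2*c)* s^2 - 2*c*(2*k1*c+k2+k2*c^2))* v^3)) * (A^2 * pf * u^2)
        - (A * (pr* s - 2*pf*c*u)) * (A^2*u^2 * ((n-1)*(-k2* s^2 - 2*c*(k1+k2*c))* v^3)) = 0"
  using sv sc by algebra

lemma alg3:
  fixes A r s c n k0 k1 k2 pr pf :: real
  assumes r: "r \<noteq> 0" and s: "s \<noteq> 0" and sc: "s^2 + c^2 = 1"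
  shows "(n*A/r*(pr* s - pf*c/r)*pf + A*pf^2*c/r^2 - (n-1)*A/r^2 * ((2*k1*c + k2*(1+c^2))/s^2))
           * (A^2 * pr)
        - (A * s * pf) * (n*A^2/r*(pr^2+pf^2/r^2) - A^2*pf^2/r^3 + k0*(n-1)*A/r^2
              + 2*(n-1)*A^2/r^3 * (k1 / s^2 + k2 * c / s^2))
        + (A*(n-1)*(pr*c + pf* s/r)*pf + k0*(n-1)* s
            - A/r * ((n-1)*((-2*k1-2*k2*c)* s^2 - 2*c*(2*k1*c+k2+k2*c^2))/s^3)) * (A^2 * pf / r^2)
        - (A * (pr* s - 2*pf*c/r)) * (A^2/r^2 * ((n-1)*(-k2* s^2 - 2*c*(k1+k2*c))/s^3)) = 0"
  using alg3p[of s "inverse s" c n A "inverse r" pr pf k1 k2 k0] r s sc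
  by (simp add: divide_inverse power_inverse)

lemma bracket2:
  assumes "r > 0" "sin ((n-1)*f) \<noteq> 0"
  shows "poisson (Jc2 n k1 k2) (Hnc1 n k0 k1 k2) r f pr pf = 0"
  unfolding poisson_def dr_J2 dpr_J2 dphi_J2[OF assms(2)] dpf_J2 dr_H[OF assms(1)] dpr_H
    dphi_H[OF assms] dpf_H[OF assms(1)]
  by (simp add: field_simps)

lemma bracket3:
  assumes "r > 0" "sin ((n-1)*f) \<noteq> 0"
  shows "poisson (Jc3 n k0 k1 k2) (Hnc1 n k0 k1 k2) r f pr pf = 0"
  unfolding poisson_def dr_J3[OF assms] dpr_J3 dphi_J3[OF assms] dpf_J3 dr_H[OF assms(1)] dpr_H
    dphi_H[OF assms] dpf_H[OF assms(1)]
  by (rule alg3) (use assms in auto)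

theorem mainTheorem7:
  fixes n k0 k1 k2 :: real
  assumes "n \<noteq> 1"
  shows "(\<forall>(r, f, pr, pf) \<in> dom_nc1 n.
            poisson (Jc2 n k1 k2) (Hnc1 n k0 k1 k2) r f pr pf = 0
          \<and> poisson (Jc3 n k0 k1 k2) (Hnc1 n k0 k1 k2) r f pr pf = 0)
       \<and> (\<exists>(r, f, pr, pf) \<in> dom_nc1 n.
            wedge3_nonzero_at (Jc2 n k1 k2) (Jc3 n k0 k1 k2) (Hnc1 n k0 k1 k2) r f pr pf)"
proof
  show "\<forall>(r, f, pr, pf) \<in> dom_nc1 n.
            poisson (Jc2 n k1 k2) (Hnc1 n k0 k1 k2) r f pr pf = 0
          \<and> poisson (Jc3 n k0 k1 k2) (Hnc1 n k0 k1 k2) r f pr pf = 0"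
    by (auto simp: dom_nc1_def bracket2 bracket3)
next
  define f0 where "f0 = pi / (2*(n-1))"
  define q where "q = sqrt (\<bar>k0 + 2*k1\<bar> + 1)"
  have n1: "n - 1 \<noteq> 0" using assms by simp
  have n2: "2*n - 2 \<noteq> 0" using n1 by simp
  have af: "(n-1)*f0 = pi/2" unfolding f0_def using n1 n2 by (simp add: field_simps)
  have sf: "sin ((n-1)*f0) = 1" and cf: "cos ((n-1)*f0) = 0" unfolding af by simp_all
  have q2: "q^2 = \<bar>k0 + 2*k1\<bar> + 1" unfolding q_def by simp
  have qpos: "q > 0" unfolding q_def by simp
  have pos: "q^2 + k0 + 2*k1 > 0" using q2 by linarith
  have one: "(0::real) < 1" by simp
  have w: "wedge3 (Jc2 n k1 k2) (Jc3 n k0 k1 k2) (Hnc1 n k0 k1 k2) 1 f0 0 q 0 2 3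
        = - 2 * q^2 * ((n-1) * (q^2 + k0 + 2*k1))"
    unfolding wedge3_def grad_def Let_def
    using sf cf
    apply (simp add: dr_J2 dpr_J2 dpf_J2 dpr_J3 dr_H[OF one] dpr_H)
    apply (simp add: algebra_simps power2_eq_square)
    done
  have "wedge3 (Jc2 n k1 k2) (Jc3 n k0 k1 k2) (Hnc1 n k0 k1 k2) 1 f0 0 q 0 2 3 \<noteq> 0"
    unfolding w using n1 pos qpos by simp
  then have "wedge3_nonzero_at (Jc2 n k1 k2) (Jc3 n k0 k1 k2) (Hnc1 n k0 k1 k2) 1 f0 0 q"
    unfolding wedge3_nonzero_at_def by (intro exI[of _ 0] exI[of _ 2] exI[of _ 3]) simp
  moreover have "(1, f0, 0, q) \<in> dom_nc1 n" unfolding dom_nc1_def using sf by simp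
  ultimately show "\<exists>(r, f, pr, pf) \<in> dom_nc1 n.
            wedge3_nonzero_at (Jc2 n k1 k2) (Jc3 n k0 k1 k2) (Hnc1 n k0 k1 k2) r f pr pf"
    by blast
qed

end
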